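(* There exist a nonzero $\varphi\in L^2(\mathbb{R}^d)$ and a nonzero $\mu\in L^1(\mathbb{R}^{2d})$ such that $B_\mu^\varphi$ is the zero operator on $L^2(\mathbb{R}^d)$.
   Context: For $x,\omega\in\mathbb{R}^d$ let $\pi(x,\omega)f(t)=e^{2\pi i\omega\cdot t}f(t-x)$. The STFT is $V_\varphi\psi(x,\omega)=\int\psi(t)\overline{\varphi(t-x)}e^{-2\pi i\omega\cdot t}dt$, the synthesis is $V_\varphi^*F=\int_{\mathbb{R}^{2d}}F(z)\pi(z)\varphi\,dz$ (weakly), and the time-frequency blurring operator is $B_\mu^\varphi\psi=V_\varphi^*(\mu*V_\varphi\psi)$. *)

theory Defs
  imports "HOL-Analysis.Analysis"
begin

text \<open>R^d is modelled by an arbitrary Euclidean space 'a (dimension DIM('a) = d),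
  R^{2d} by 'a \<times> 'a, with z = (x, \<omega>). Functions are complex valued.\<close>

definition L2 :: "('a::euclidean_space \<Rightarrow> complex) \<Rightarrow> bool" where
  "L2 f \<longleftrightarrow> f \<in> borel_measurable lborel \<and> integrable lborel (\<lambda>x. (cmod (f x))\<^sup>2)"

definition L1 :: "('b::euclidean_space \<Rightarrow> complex) \<Rightarrow> bool" where
  "L1 f \<longleftrightarrow> integrable lborel f"

definition nonzero_ae :: "('b::euclidean_space \<Rightarrow> complex) \<Rightarrow> bool" where
  "nonzero_ae f \<longleftrightarrow> \<not> (AE x in lborel. f x = 0)"

definition stft :: "('a::euclidean_space \<Rightarrow> complex) \<Rightarrow> ('a \<Rightarrow> complex) \<Rightarrow> 'a \<times> 'a \<Rightarrow> complex" where
  "stft \<phi> \<psi> z = (LINT t|lborel. \<psi> t * cnj (\<phi> (t - fst z)) *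
                     exp (- (2 * complex_of_real pi * \<i>) * complex_of_real (snd z \<bullet> t)))"

definition conv :: "('b::euclidean_space \<Rightarrow> complex) \<Rightarrow> ('b \<Rightarrow> complex) \<Rightarrow> 'b \<Rightarrow> complex" where
  "conv \<mu> F z = (LINT w|lborel. \<mu> w * F (z - w))"

text \<open>The blurring operator B_\<mu>^\<phi> \<psi> = V_\<phi>^*(\<mu> * V_\<phi>\<psi>), with V_\<phi>^* defined weakly:
  <B \<psi>, g> = \<integral> (\<mu> * V_\<phi>\<psi>)(z) conj(V_\<phi> g(z)) dz  (since <\<pi>(z)\<phi>, g> = conj(V_\<phi> g(z))).
  B is the zero operator on L^2 iff all these pairings vanish.\<close>
definition blur_pairing ::
  "('a::euclidean_space \<times> 'a \<Rightarrow> complex) \<Rightarrow> ('a \<Rightarrow> complex) \<Rightarrow> ('a \<Rightarrow> complex) \<Rightarrow> ('a \<Rightarrow> complex) \<Rightarrow> complex" where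
  "blur_pairing \<mu> \<phi> \<psi> g = (LINT z|lborel. conv \<mu> (stft \<phi> \<psi>) z * cnj (stft \<phi> g z))"

definition blur_is_zero :: "('a::euclidean_space \<times> 'a \<Rightarrow> complex) \<Rightarrow> ('a \<Rightarrow> complex) \<Rightarrow> bool" where
  "blur_is_zero \<mu> \<phi> \<longleftrightarrow> (\<forall>\<psi> g. L2 \<psi> \<longrightarrow> L2 g \<longrightarrow> blur_pairing \<mu> \<phi> \<psi> g = 0)"

end

theory Submission
  imports Defs "HOL-Probability.Characteristic_Functions"
begin

lemma gauss_char:
  "(\<integral>x. complex_of_real (std_normal_density x) * iexp (t * x) \<partial>lborel) = complex_of_real (exp (- (t^2) / 2))"
proof -
  have "char std_normal_distribution t = complex_of_real (exp (- (t^2) / 2))"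
    by (simp add: char_std_normal_distribution)
  then show ?thesis unfolding char_def
    by (subst (asm) integral_density) (auto simp: scaleR_conv_of_real)
qed

definition ee :: "real \<Rightarrow> complex" where
  "ee s = exp (- (2 * complex_of_real pi * \<i>) * complex_of_real s)"

lemma gauss_ft:
  assumes n: "(n::real) > 0"
  shows "(\<integral>y. complex_of_real (exp (- pi * y^2 / n)) * ee (y * v) \<partial>lborel)
       = complex_of_real (sqrt n * exp (- pi * n * v^2))"
proof -
  define a where "a = sqrt (n / (2*pi))"
  have a: "a > 0" using n by (simp add: a_def)
  have a2: "a^2 = n/(2*pi)" using n by (simp add: a_def)
  define t where "t = - 2 * pi * a * v"
  have eq: "complex_of_real (exp (- pi * (a*x)^2 / n)) * ee ((a*x) * v)
      = complex_of_real (sqrt (2*pi)) * (complex_of_real (std_normal_density x) * iexp (t * x))" for x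
  proof -
    have 1: "- pi * (a*x)^2 / n = -(x^2)/2" using n a2 by (simp add: power_mult_distrib field_simps)
    have 2: "ee ((a*x) * v) = iexp (t * x)" unfolding ee_def t_def
      by (rule arg_cong[where f=exp]) (simp add: field_simps)
    show ?thesis unfolding 1 2 std_normal_density_def by (simp add: field_simps)
  qed
  have "(\<integral>y. complex_of_real (exp (- pi * y^2 / n)) * ee (y * v) \<partial>lborel)
     = a *\<^sub>R (\<integral>x. complex_of_real (exp (- pi * (a*x)^2 / n)) * ee ((a*x) * v) \<partial>lborel)"
    using lborel_integral_real_affine[of a "\<lambda>y. complex_of_real (exp (- pi * y^2 / n)) * ee (y * v)" 0] a
    by simp
  also have "\<dots> = a *\<^sub>R (complex_of_real (sqrt (2*pi)) * complex_of_real (exp (- (t^2) / 2)))"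
    unfolding eq using gauss_char[of t] by simp
  also have "\<dots> = complex_of_real (sqrt n * exp (- pi * n * v^2))"
  proof -
    have "a * sqrt (2*pi) = sqrt n" using n by (simp add: a_def real_sqrt_divide)
    moreover have "- (t^2)/2 = - pi * n * v^2" using a2 n unfolding t_def
      by (simp add: power_mult_distrib field_simps power2_eq_square)
    ultimately show ?thesis by (simp add: scaleR_conv_of_real mult.assoc[symmetric] flip: of_real_mult)
  qed
  finally show ?thesis .
qed

lemma integral_lborel_prod:
  fixes f :: "'a::euclidean_space \<Rightarrow> real \<Rightarrow> complex"
  assumes int: "\<And>b. b \<in> Basis \<Longrightarrow> integrable lborel (f b)"
  shows "(\<integral>x. (\<Prod>b\<in>Basis. f b (x \<bullet> b)) \<partial>lborel) = (\<Prod>b\<in>Basis. (\<integral>x. f b x \<partial>lborel))"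
proof -
  interpret product_sigma_finite "\<lambda>_::'a. lborel :: real measure" by standard
  have meas[measurable]: "f b \<in> borel_measurable borel" if "b \<in> Basis" for b
    using int[OF that] by (simp add: borel_measurable_integrable)
  have "(\<integral>x. (\<Prod>b\<in>Basis. f b (x \<bullet> b)) \<partial>lborel)
      = (\<integral>x. (\<Prod>b\<in>Basis. f b ((\<Sum>b\<in>Basis. x b *\<^sub>R b) \<bullet> b)) \<partial>(\<Pi>\<^sub>M b\<in>Basis. lborel))"
    by (subst lborel_eq) (rule integral_distr, auto)
  also have "\<dots> = (\<integral>x. (\<Prod>b\<in>Basis. f b (x b)) \<partial>(\<Pi>\<^sub>M b\<in>Basis. lborel))"
    by (rule Bochner_Integration.integral_cong[OF refl], rule prod.cong[OF refl])
       (simp add: inner_sum_left inner_Basis if_distrib if_distribR sum.delta cong: if_cong)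
  also have "\<dots> = (\<Prod>b\<in>Basis. (\<integral>x. f b x \<partial>lborel))"
    by (rule product_integral_prod) (auto intro: int)
  finally show ?thesis .
qed


lemma gauss_integrable:
  assumes n: "(n::real) > 0"
  shows "integrable lborel (\<lambda>y. exp (- pi * y^2 / n))"
proof -
  define \<sigma> where "\<sigma> = sqrt (n / (2*pi))"
  have s2: "\<sigma>^2 = n/(2*pi)" using n by (simp add: \<sigma>_def)
  have sp: "\<sigma> > 0" using n by (simp add: \<sigma>_def)
  have eq: "exp (- pi * y^2 / n) = sqrt n * normal_density 0 \<sigma> y" for y
  proof -
    have "sqrt (2 * pi * \<sigma>\<^sup>2) = sqrt n" using n s2 by simp
    moreover have "-(y - 0)\<^sup>2 / (2 * \<sigma>\<^sup>2) = - pi * y^2 / n" unfolding s2 using n by (simp add: field_simps)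
    ultimately show ?thesis unfolding normal_density_def using n sp by simp
  qed
  have "integrable lborel (\<lambda>y. sqrt n * normal_density 0 \<sigma> y)"
    using sp by (intro integrable_mult_right integrable_normal_density) auto
  then show ?thesis by (simp only: eq)
qed

lemma ee_norm[simp]: "norm (ee s) = 1"
  unfolding ee_def by (simp add: norm_exp_eq_Re)

lemma ee_add: "ee (a + b) = ee a * ee b"
  unfolding ee_def by (simp add: distrib_left exp_add[symmetric])

lemma ee_sum: "finite A \<Longrightarrow> ee (\<Sum>i\<in>A. f i) = (\<Prod>i\<in>A. ee (f i))"
  by (induction A rule: finite_induct) (auto simp: ee_add, simp add: ee_def)

lemma ee_continuous[continuous_intros]: "continuous_on S ee"
  unfolding ee_def by (intro continuous_intros)

lemma ee_measurable[measurable]: "ee \<in> borel_measurable borel"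
  by (intro borel_measurable_continuous_onI ee_continuous)

lemma gauss_integrable_c:
  assumes n: "(n::real) > 0"
  shows "integrable lborel (\<lambda>y. complex_of_real (exp (- pi * y^2 / n)) * ee (y * v))"
  by (rule Bochner_Integration.integrable_bound[OF gauss_integrable[OF n]]) (auto simp: norm_mult)

lemma gauss_ft_multi:
  assumes n: "(n::real) > 0"
  shows "(\<integral>\<omega>. complex_of_real (exp (- pi * (norm \<omega>)^2 / n)) * ee (\<omega> \<bullet> u) \<partial>lborel)
       = complex_of_real (sqrt n ^ DIM('a) * exp (- pi * n * (norm (u::'a::euclidean_space))^2))"
proof -
  have nsq: "(norm w)^2 = (\<Sum>b\<in>Basis. (w \<bullet> b)^2)" for w :: 'a
    by (simp add: norm_eq_sqrt_inner euclidean_inner[of w w] power2_eq_square sum_nonneg)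
  have "complex_of_real (exp (- pi * (norm \<omega>)^2 / n)) * ee (\<omega> \<bullet> u)
      = (\<Prod>b\<in>Basis. complex_of_real (exp (- pi * (\<omega> \<bullet> b)^2 / n)) * ee ((\<omega> \<bullet> b) * (u \<bullet> b)))" for \<omega>
  proof -
    have "exp (- pi * (norm \<omega>)^2 / n) = (\<Prod>b\<in>Basis. exp (- pi * (\<omega> \<bullet> b)^2 / n))"
      unfolding nsq by (simp add: sum_distrib_left sum_divide_distrib exp_sum[symmetric])
    moreover have "ee (\<omega> \<bullet> u) = (\<Prod>b\<in>Basis. ee ((\<omega> \<bullet> b) * (u \<bullet> b)))"
      by (subst euclidean_inner) (simp add: ee_sum)
    ultimately show ?thesis by (simp add: prod.distrib)
  qed
  then have "(\<integral>\<omega>. complex_of_real (exp (- pi * (norm \<omega>)^2 / n)) * ee (\<omega> \<bullet> u) \<partial>lborel)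
     = (\<integral>\<omega>. (\<Prod>b\<in>Basis. complex_of_real (exp (- pi * (\<omega> \<bullet> b)^2 / n)) * ee ((\<omega> \<bullet> b) * (u \<bullet> b))) \<partial>lborel)"
    by (simp only:)
  also have "\<dots> = (\<Prod>b\<in>Basis. (\<integral>y. complex_of_real (exp (- pi * y^2 / n)) * ee (y * (u \<bullet> b)) \<partial>lborel))"
    by (rule integral_lborel_prod[where f="\<lambda>b y. complex_of_real (exp (- pi * y^2 / n)) * ee (y * (u \<bullet> b))"])
       (rule gauss_integrable_c[OF n])
  also have "\<dots> = (\<Prod>b\<in>(Basis::'a set). complex_of_real (sqrt n * exp (- pi * n * (u \<bullet> b)^2)))"
    by (rule prod.cong[OF refl], rule gauss_ft[OF n])
  also have "\<dots> = complex_of_real (sqrt n ^ DIM('a) * exp (- pi * n * (norm u)^2))"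
    unfolding nsq by (simp add: prod.distrib sum_distrib_left exp_sum[symmetric] flip: of_real_prod)
  finally show ?thesis .
qed


lemma (in pair_sigma_finite) integrable_mult_pair:
  fixes u :: "_ \<Rightarrow> 'c::{real_normed_field, banach, second_countable_topology}"
  assumes u: "integrable M1 u" and v: "integrable M2 v"
  shows "integrable (M1 \<Otimes>\<^sub>M M2) (\<lambda>p. u (fst p) * v (snd p))"
proof (rule Fubini_integrable)
  have [measurable]: "u \<in> borel_measurable M1" "v \<in> borel_measurable M2"
    using u v by (auto intro: borel_measurable_integrable)
  show "(\<lambda>p. u (fst p) * v (snd p)) \<in> borel_measurable (M1 \<Otimes>\<^sub>M M2)" by measurable
  have "(\<lambda>x. \<integral>y. norm (u (fst (x, y)) * v (snd (x, y))) \<partial>M2) = (\<lambda>x. norm (u x) * (\<integral>y. norm (v y) \<partial>M2))"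
    by (simp add: norm_mult)
  moreover have "integrable M1 (\<lambda>x. norm (u x) * (\<integral>y. norm (v y) \<partial>M2))"
    using u by (intro integrable_mult_left integrable_norm)
  ultimately show "integrable M1 (\<lambda>x. \<integral>y. norm (u (fst (x, y)) * v (snd (x, y))) \<partial>M2)" by simp
  show "AE x in M1. integrable M2 (\<lambda>y. u (fst (x, y)) * v (snd (x, y)))"
    using v by (auto intro: integrable_mult_right)
qed

lemma (in pair_sigma_finite) integral_mult_pair:
  fixes u :: "_ \<Rightarrow> 'c::{real_normed_field, banach, second_countable_topology}"
  assumes u: "integrable M1 u" and v: "integrable M2 v"
  shows "(\<integral>p. u (fst p) * v (snd p) \<partial>(M1 \<Otimes>\<^sub>M M2)) = (\<integral>x. u x \<partial>M1) * (\<integral>y. v y \<partial>M2)"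
proof -
  have "integrable (M1 \<Otimes>\<^sub>M M2) (case_prod (\<lambda>x y. u x * v y))"
    using integrable_mult_pair[OF u v] by (simp add: case_prod_beta')
  from integral_fst[OF this] show ?thesis
    by (simp add: case_prod_beta')
qed



lemma measurable_fst_lborel[measurable]: "fst \<in> measurable (lborel::('a::euclidean_space\<times>'b::euclidean_space) measure) (lborel::'a measure)"
  by (subst lborel_prod[symmetric]) measurable

lemma measurable_snd_lborel[measurable]: "snd \<in> measurable (lborel::('a::euclidean_space\<times>'b::euclidean_space) measure) (lborel::'b measure)"
  by (subst lborel_prod[symmetric]) measurable

lemma measurable_cnj'[measurable (raw)]: "g \<in> borel_measurable M \<Longrightarrow> (\<lambda>x. cnj (g x)) \<in> borel_measurable M"
  by (rule borel_measurable_continuous_on[where f=cnj]) (auto intro: continuous_intros)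

lemma measurable_ee'[measurable (raw)]: "g \<in> borel_measurable M \<Longrightarrow> (\<lambda>x. ee (g x)) \<in> borel_measurable M"
  by (rule borel_measurable_continuous_on[where f=ee]) (auto intro: continuous_intros)

lemma meas_fst_snd[measurable]: "(\<lambda>x::'a::euclidean_space\<times>('a\<times>'a). fst (snd x)) \<in> borel_measurable (lborel \<Otimes>\<^sub>M lborel)"
  using measurable_compose[OF measurable_snd measurable_fst_lborel[where 'a='a and 'b='a]]
  by (simp add: comp_def measurable_lborel2)

lemma meas_snd_snd[measurable]: "(\<lambda>x::'a::euclidean_space\<times>('a\<times>'a). snd (snd x)) \<in> borel_measurable (lborel \<Otimes>\<^sub>M lborel)"
  using measurable_compose[OF measurable_snd measurable_snd_lborel[where 'a='a and 'b='a]]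
  by (simp add: comp_def measurable_lborel2)

lemma meas_inner3:
 shows "(\<lambda>x::'a::euclidean_space\<times>('a\<times>'a). (fst x \<bullet> (fst (snd x) - snd (snd x)))) \<in> borel_measurable (lborel \<Otimes>\<^sub>M lborel)"
 by measurable

definition FT :: "('a::euclidean_space \<Rightarrow> complex) \<Rightarrow> 'a \<Rightarrow> complex" where
  "FT f \<omega> = (\<integral>t. f t * ee (\<omega> \<bullet> t) \<partial>lborel)"

lemma cnj_ee: "cnj (ee s) = ee (- s)"
  unfolding ee_def exp_cnj by simp

lemma ee_inner_diff: "ee (\<omega> \<bullet> (t - s)) = ee (\<omega> \<bullet> t) * cnj (ee (\<omega> \<bullet> s))"
  by (simp add: cnj_ee inner_diff_right ee_add[symmetric])

lemma decay_lim: "(\<lambda>k. sqrt (real (Suc k)) ^ D * exp (- pi * real (Suc k))) \<longlonglongrightarrow> 0"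
proof -
  have 1: "((\<lambda>x::real. x ^ D / exp x) \<longlongrightarrow> 0) at_top" by (rule tendsto_power_div_exp_0)
  have 2: "filterlim (\<lambda>k. real (Suc k)) at_top sequentially"
    by (rule filterlim_compose[OF filterlim_real_sequentially filterlim_Suc])
  have lim: "(\<lambda>k. real (Suc k) ^ D / exp (real (Suc k))) \<longlonglongrightarrow> 0"
    using filterlim_compose[OF 1 2] by simp
  show ?thesis
  proof (rule Lim_null_comparison[OF _ lim], rule always_eventually, rule allI)
    fix k
    let ?n = "real (Suc k)"
    have "sqrt ?n ^ D \<le> ?n ^ D" by (intro power_mono real_le_lsqrt) (auto simp: power2_eq_square)
    moreover have "exp (- pi * ?n) \<le> inverse (exp ?n)"
    proof -
      have "1 + real k \<le> pi * (1 + real k)" using mult_right_mono[of 1 pi "1 + real k"] pi_gt3 by simp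
      then show ?thesis by (simp add: exp_minus[symmetric] algebra_simps)
    qed
    ultimately have "sqrt ?n ^ D * exp (- pi * ?n) \<le> ?n ^ D * inverse (exp ?n)"
      by (intro mult_mono) auto
    then show "norm (sqrt ?n ^ D * exp (- pi * ?n)) \<le> ?n ^ D / exp ?n"
      by (simp add: divide_inverse)
  qed
qed


lemma integrable_lborel_prod:
  fixes f :: "'a::euclidean_space \<Rightarrow> real \<Rightarrow> 'c::{real_normed_field,banach,second_countable_topology}"
  assumes int: "\<And>b. b \<in> Basis \<Longrightarrow> integrable lborel (f b)"
  shows "integrable lborel (\<lambda>x. (\<Prod>b\<in>Basis. f b (x \<bullet> b)))"
proof -
  interpret product_sigma_finite "\<lambda>_::'a. lborel :: real measure" by standard
  have meas[measurable]: "f b \<in> borel_measurable borel" if "b \<in> Basis" for b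
    using int[OF that] by (simp add: borel_measurable_integrable)
  have pi_int: "integrable (\<Pi>\<^sub>M b\<in>Basis. lborel) (\<lambda>x. (\<Prod>b\<in>Basis. f b (x b)))"
    by (rule product_integrable_prod) (auto intro: int)
  have eq: "(\<lambda>x. (\<Prod>b\<in>Basis. f b ((\<Sum>b\<in>Basis. x b *\<^sub>R b) \<bullet> b))) = (\<lambda>x. (\<Prod>b\<in>Basis. f b (x b)))"
    by (rule ext, rule prod.cong[OF refl])
       (simp add: inner_sum_left inner_Basis if_distrib if_distribR sum.delta cong: if_cong)
  have "integrable (\<Pi>\<^sub>M b\<in>Basis. lborel) (\<lambda>x. (\<Prod>b\<in>Basis. f b ((\<Sum>b\<in>Basis. x b *\<^sub>R b) \<bullet> b)))"
    using pi_int eq by simp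
  then show ?thesis
    by (subst lborel_eq) (subst integrable_distr_eq, auto)
qed

lemma gauss_integrable_multi:
  assumes n: "(n::real) > 0"
  shows "integrable lborel (\<lambda>\<omega>::'a::euclidean_space. exp (- pi * (norm \<omega>)^2 / n))"
proof -
  have nsq: "(norm w)^2 = (\<Sum>b\<in>Basis. (w \<bullet> b)^2)" for w :: 'a
    by (simp add: norm_eq_sqrt_inner euclidean_inner[of w w] power2_eq_square sum_nonneg)
  have "exp (- pi * (norm \<omega>)^2 / n) = (\<Prod>b\<in>Basis. exp (- pi * (\<omega> \<bullet> b)^2 / n))" for \<omega> :: 'a
    unfolding nsq by (simp add: sum_distrib_left sum_divide_distrib exp_sum[symmetric])
  moreover have "integrable lborel (\<lambda>\<omega>::'a. (\<Prod>b\<in>Basis. exp (- pi * (\<omega> \<bullet> b)^2 / n)))"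
    by (rule integrable_lborel_prod[where f="\<lambda>b y. exp (- pi * y^2 / n)"]) (rule gauss_integrable[OF n])
  ultimately show ?thesis by simp
qed

lemma int_ee:
  fixes f :: "'a::euclidean_space \<Rightarrow> complex"
  assumes f: "integrable lborel f"
  shows "integrable lborel (\<lambda>t. f t * ee (\<omega> \<bullet> t))"
proof (rule Bochner_Integration.integrable_bound[OF f])
  have [measurable]: "f \<in> borel_measurable lborel" using f by (rule borel_measurable_integrable)
  show "(\<lambda>t. f t * ee (\<omega> \<bullet> t)) \<in> borel_measurable lborel" by measurable
qed (auto simp: norm_mult)


lemma parseval_sep:
  fixes f h :: "'a::euclidean_space \<Rightarrow> complex"
  assumes f: "integrable lborel f" and h: "integrable lborel h"
    and sep: "\<And>t s. f t \<noteq> 0 \<Longrightarrow> h s \<noteq> 0 \<Longrightarrow> 1 \<le> norm (t - s)"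
    and FHi: "integrable lborel (\<lambda>\<omega>. FT f \<omega> * cnj (FT h \<omega>))"
  shows "(\<integral>\<omega>. FT f \<omega> * cnj (FT h \<omega>) \<partial>lborel) = 0"
proof -
  have fm[measurable]: "f \<in> borel_measurable lborel" using f by (rule borel_measurable_integrable)
  have hm[measurable]: "h \<in> borel_measurable lborel" using h by (rule borel_measurable_integrable)
  define FH where "FH \<omega> = FT f \<omega> * cnj (FT h \<omega>)" for \<omega>
  have FHm[measurable]: "FH \<in> borel_measurable lborel"
    using FHi unfolding FH_def[abs_def] by (rule borel_measurable_integrable)
  define n where "n k = real (Suc k)" for k
  have npos: "n k > 0" for k by (simp add: n_def)
  define G where "G k \<omega> = complex_of_real (exp (- pi * (norm \<omega>)^2 / n k))" for k and \<omega> :: 'a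
  have Gm[measurable]: "G k \<in> borel_measurable lborel" for k
    unfolding G_def by measurable
  define \<delta> where "\<delta> k = sqrt (n k) ^ DIM('a) * exp (- pi * n k)" for k
  define C where "C = (\<integral>t. norm (f t) \<partial>lborel) * (\<integral>s. norm (h s) \<partial>lborel)"
  have A: "(\<lambda>k. \<integral>\<omega>. G k \<omega> * FH \<omega> \<partial>lborel) \<longlonglongrightarrow> (\<integral>\<omega>. FH \<omega> \<partial>lborel)"
  proof (rule integral_dominated_convergence[where w="\<lambda>\<omega>. norm (FH \<omega>)"])
    show "integrable lborel (\<lambda>\<omega>. norm (FH \<omega>))" using FHi unfolding FH_def by (rule integrable_norm)
    show "AE \<omega> in lborel. (\<lambda>k. G k \<omega> * FH \<omega>) \<longlonglongrightarrow> FH \<omega>"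
    proof (rule AE_I2)
      fix \<omega> :: 'a
      have "(\<lambda>k. - pi * (norm \<omega>)^2 * inverse (real (Suc k))) \<longlonglongrightarrow> - pi * (norm \<omega>)^2 * 0"
        by (intro tendsto_mult tendsto_const LIMSEQ_inverse_real_of_nat)
      then have "(\<lambda>k. exp (- pi * (norm \<omega>)^2 / n k)) \<longlonglongrightarrow> exp 0"
        unfolding n_def by (intro tendsto_exp) (simp add: divide_inverse)
      then have "(\<lambda>k. G k \<omega>) \<longlonglongrightarrow> 1"
        unfolding G_def by (metis exp_zero of_real_1 tendsto_of_real)
      then show "(\<lambda>k. G k \<omega> * FH \<omega>) \<longlonglongrightarrow> FH \<omega>"
        using tendsto_mult_right[of "\<lambda>k. G k \<omega>" 1 sequentially "FH \<omega>"] by simp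
    qed
    show "AE \<omega> in lborel. norm (G k \<omega> * FH \<omega>) \<le> norm (FH \<omega>)" for k
    proof (rule AE_I2)
      fix \<omega> :: 'a
      have "exp (- pi * (norm \<omega>)^2 / n k) \<le> 1" using npos[of k] by (simp add: divide_nonneg_pos)
      then show "norm (G k \<omega> * FH \<omega>) \<le> norm (FH \<omega>)"
        unfolding G_def norm_mult by (intro mult_left_le_one_le) auto
    qed
  qed measurable
  have B: "(\<integral>\<omega>. G k \<omega> * FH \<omega> \<partial>lborel)
      = (\<integral>p. f (fst p) * cnj (h (snd p)) * complex_of_real (sqrt (n k) ^ DIM('a) * exp (- pi * n k * (norm (fst p - snd p))^2)) \<partial>lborel)" for k
  proof -
    define \<Phi> where "\<Phi> \<omega> p = G k \<omega> * (f (fst p) * cnj (h (snd p))) * ee (\<omega> \<bullet> (fst p - snd p))"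
      for \<omega> :: 'a and p :: "'a \<times> 'a"
    have fh_int: "integrable (lborel::('a\<times>'a) measure) (\<lambda>p. f (fst p) * cnj (h (snd p)))"
      using lborel_pair.integrable_mult_pair[OF f integrable_cnj[OF h]] by (simp add: lborel_prod)
    have Gint: "integrable lborel (\<lambda>\<omega>. norm (G k \<omega>))"
      unfolding G_def using gauss_integrable_multi[OF npos[of k]] by simp
    have Phi_int: "integrable (lborel \<Otimes>\<^sub>M lborel) (case_prod \<Phi>)"
    proof (rule Bochner_Integration.integrable_bound)
      show "integrable (lborel \<Otimes>\<^sub>M lborel) (\<lambda>q. norm (G k (fst q)) * norm (f (fst (snd q)) * cnj (h (snd (snd q)))))"
        by (rule lborel_pair.integrable_mult_pair[OF Gint integrable_norm[OF fh_int]])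
      have hc[measurable]: "(\<lambda>s. cnj (h s)) \<in> borel_measurable lborel" by (rule measurable_cnj'[OF hm])
      note m3 = meas_inner3[where 'a='a]
      have m4[measurable]: "(\<lambda>q::'a\<times>('a\<times>'a). ee (fst q \<bullet> (fst (snd q) - snd (snd q)))) \<in> borel_measurable (lborel \<Otimes>\<^sub>M lborel)"
        by (rule measurable_ee'[OF m3])
      have m5[measurable]: "(\<lambda>q::'a\<times>('a\<times>'a). cnj (h (snd (snd q)))) \<in> borel_measurable (lborel \<Otimes>\<^sub>M lborel)"
        using measurable_compose[OF measurable_compose[OF measurable_snd measurable_snd_lborel] hc] by (simp add: comp_def)
      show "case_prod \<Phi> \<in> borel_measurable (lborel \<Otimes>\<^sub>M lborel)"
        unfolding \<Phi>_def[abs_def] G_def split_beta' by measurable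
      show "AE q in lborel \<Otimes>\<^sub>M lborel. norm (case_prod \<Phi> q) \<le> norm (norm (G k (fst q)) * norm (f (fst (snd q)) * cnj (h (snd (snd q)))))"
        by (auto simp: \<Phi>_def norm_mult)
    qed
    have inner1: "(\<integral>p. \<Phi> \<omega> p \<partial>lborel) = G k \<omega> * FH \<omega>" for \<omega>
    proof -
      have "\<Phi> \<omega> p = G k \<omega> * ((f (fst p) * ee (\<omega> \<bullet> fst p)) * cnj (h (snd p) * ee (\<omega> \<bullet> snd p)))" for p
        by (simp add: \<Phi>_def ee_inner_diff)
      then have "(\<integral>p. \<Phi> \<omega> p \<partial>lborel) = G k \<omega> * (\<integral>p. (f (fst p) * ee (\<omega> \<bullet> fst p)) * cnj (h (snd p) * ee (\<omega> \<bullet> snd p)) \<partial>(lborel \<Otimes>\<^sub>M lborel))"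
        by (simp add: lborel_prod)
      also have "\<dots> = G k \<omega> * ((\<integral>t. f t * ee (\<omega> \<bullet> t) \<partial>lborel) * (\<integral>s. cnj (h s * ee (\<omega> \<bullet> s)) \<partial>lborel))"
        using lborel_pair.integral_mult_pair[OF int_ee[OF f] integrable_cnj[OF int_ee[OF h]], of \<omega> \<omega>]
        by simp
      also have "\<dots> = G k \<omega> * FH \<omega>"
        by (simp only: FH_def FT_def Bochner_Integration.integral_cnj)
      finally show ?thesis .
    qed
    have inner2: "(\<integral>\<omega>. \<Phi> \<omega> p \<partial>lborel) = f (fst p) * cnj (h (snd p)) * complex_of_real (sqrt (n k) ^ DIM('a) * exp (- pi * n k * (norm (fst p - snd p))^2))" for p
    proof -
      have "(\<integral>\<omega>. \<Phi> \<omega> p \<partial>lborel) = (f (fst p) * cnj (h (snd p))) * (\<integral>\<omega>. G k \<omega> * ee (\<omega> \<bullet> (fst p - snd p)) \<partial>lborel)"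
      proof -
        have "\<Phi> \<omega> p = (f (fst p) * cnj (h (snd p))) * (G k \<omega> * ee (\<omega> \<bullet> (fst p - snd p)))" for \<omega>
          by (simp add: \<Phi>_def ac_simps)
        then show ?thesis by (simp only: integral_mult_right_zero)
      qed
      also have "\<dots> = f (fst p) * cnj (h (snd p)) * complex_of_real (sqrt (n k) ^ DIM('a) * exp (- pi * n k * (norm (fst p - snd p))^2))"
        unfolding G_def by (subst gauss_ft_multi[OF npos]) simp
      finally show ?thesis .
    qed
    have "(\<integral>\<omega>. G k \<omega> * FH \<omega> \<partial>lborel) = (\<integral>\<omega>. (\<integral>p. \<Phi> \<omega> p \<partial>lborel) \<partial>lborel)"
      by (simp add: inner1)
    also have "\<dots> = (\<integral>p. (\<integral>\<omega>. \<Phi> \<omega> p \<partial>lborel) \<partial>lborel)"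
      using lborel_pair.Fubini_integral[OF Phi_int] by simp
    also have "\<dots> = (\<integral>p. f (fst p) * cnj (h (snd p)) * complex_of_real (sqrt (n k) ^ DIM('a) * exp (- pi * n k * (norm (fst p - snd p))^2)) \<partial>lborel)"
      by (simp add: inner2 lborel_prod)
    finally show ?thesis .
  qed
  have Cb: "norm (\<integral>p. f (fst p) * cnj (h (snd p)) * complex_of_real (sqrt (n k) ^ DIM('a) * exp (- pi * n k * (norm (fst p - snd p))^2)) \<partial>(lborel::('a\<times>'a) measure))
      \<le> \<delta> k * C" for k
  proof -
    let ?F = "\<lambda>p::'a\<times>'a. f (fst p) * cnj (h (snd p)) * complex_of_real (sqrt (n k) ^ DIM('a) * exp (- pi * n k * (norm (fst p - snd p))^2))"
    let ?g = "\<lambda>p::'a\<times>'a. \<delta> k * (norm (f (fst p)) * norm (h (snd p)))"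
    have fhn: "integrable (lborel::('a\<times>'a) measure) (\<lambda>p. norm (f (fst p)) * norm (h (snd p)))"
      using lborel_pair.integrable_mult_pair[OF integrable_norm[OF f] integrable_norm[OF h]] by (simp add: lborel_prod)
    have gi: "integrable lborel ?g" using fhn by (rule integrable_mult_right)
    have bnd: "norm (?F p) \<le> ?g p" for p
    proof (cases "f (fst p) = 0 \<or> h (snd p) = 0")
      case True then show ?thesis by (auto simp: \<delta>_def)
    next
      case False
      then have "1 \<le> norm (fst p - snd p)" using sep by auto
      then have "1 \<le> (norm (fst p - snd p))^2" by (simp add: one_le_power)
      then have "pi * n k * 1 \<le> pi * n k * (norm (fst p - snd p))^2"
        using npos[of k] by (intro mult_left_mono) auto
      then have "exp (- pi * n k * (norm (fst p - snd p))^2) \<le> exp (- pi * n k)" by simp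
      then have e: "sqrt (n k) ^ DIM('a) * exp (- pi * n k * (norm (fst p - snd p))^2) \<le> \<delta> k"
        unfolding \<delta>_def using npos[of k] by (intro mult_left_mono) auto
      have "norm (?F p) = (norm (f (fst p)) * norm (h (snd p))) * (sqrt (n k) ^ DIM('a) * exp (- pi * n k * (norm (fst p - snd p))^2))"
        using npos[of k] by (simp add: norm_mult norm_power)
      also have "\<dots> \<le> (norm (f (fst p)) * norm (h (snd p))) * \<delta> k"
        by (intro mult_left_mono e) auto
      finally show ?thesis by (simp add: ac_simps)
    qed
    have Fi: "integrable lborel ?F"
    proof (rule Bochner_Integration.integrable_bound[OF gi])
      show "?F \<in> borel_measurable lborel"
        by (subst lborel_prod[symmetric]) (measurable, auto intro: measurable_cnj' hm simp: borel_prod)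
      show "AE p in lborel. norm (?F p) \<le> norm (?g p)"
        using bnd by (auto intro!: AE_I2 order_trans[OF _ abs_ge_self])
    qed
    have "norm (\<integral>p. ?F p \<partial>lborel) \<le> (\<integral>p. ?g p \<partial>lborel)"
      by (rule Bochner_Integration.integral_norm_bound_integral[OF Fi gi bnd])
    also have "\<dots> = \<delta> k * C"
      using lborel_pair.integral_mult_pair[OF integrable_norm[OF f] integrable_norm[OF h]]
      by (simp add: lborel_prod C_def)
    finally show ?thesis .
  qed
  have lim0: "(\<lambda>k. \<integral>\<omega>. G k \<omega> * FH \<omega> \<partial>lborel) \<longlonglongrightarrow> 0"
  proof (rule Lim_null_comparison[OF always_eventually])
    show "\<forall>k. norm (\<integral>\<omega>. G k \<omega> * FH \<omega> \<partial>lborel) \<le> \<delta> k * C" using B Cb by simp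
    show "(\<lambda>k. \<delta> k * C) \<longlonglongrightarrow> 0"
      unfolding \<delta>_def n_def using decay_lim[of "DIM('a)"] by (intro tendsto_mult_left_zero) simp
  qed
  from LIMSEQ_unique[OF A lim0] show ?thesis unfolding FH_def .
qed



definition ind :: "'b::euclidean_space set \<Rightarrow> 'b \<Rightarrow> complex" where
  "ind S t = complex_of_real (indicator S t)"

lemma ind_cases: "ind S t = (if t \<in> S then 1 else 0)"
  by (simp add: ind_def)

lemma cnj_ind[simp]: "cnj (ind S t) = ind S t"
  by (simp add: ind_cases)

lemma norm_ind[simp]: "norm (ind S t) = indicator S t"
  by (simp add: ind_cases)

lemma ind_measurable[measurable]: "S \<in> sets borel \<Longrightarrow> ind S \<in> borel_measurable borel"
  unfolding ind_def[abs_def]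
  by (rule borel_measurable_continuous_on[where f=complex_of_real, OF _ borel_measurable_indicator])
     (auto intro: continuous_intros)

lemma le_sq_plus_one: "(x::real) \<le> x^2 + 1"
proof -
  have "0 \<le> (x - 1)^2" by simp
  then have "x*2 \<le> 1 + x*x" by (simp add: power2_eq_square algebra_simps)
  moreover have "0 \<le> x*x" by simp
  ultimately show ?thesis unfolding power2_eq_square by linarith
qed

lemma cball_finite: "emeasure lborel (cball (c::'b::euclidean_space) r) < \<infinity>"
proof (cases "r \<ge> 0")
  case True then show ?thesis by (simp add: emeasure_cball)
next
  case False then have "cball c r = {}" by auto
  then show ?thesis by simp
qed

lemma ind_cball_integrable: "integrable lborel (ind (cball (c::'b::euclidean_space) r))"
  unfolding ind_def[abs_def]
  by (intro integrable_of_real integrable_real_indicator cball_finite) auto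

lemma ind_cball_nonzero_ae:
  assumes "r > 0"
  shows "nonzero_ae (ind (cball (c::'b::euclidean_space) r))"
unfolding nonzero_ae_def proof
  assume "AE x in lborel. ind (cball c r) x = 0"
  then have "AE x in lborel. x \<notin> cball c r"
    by (rule AE_mp) (auto simp: ind_cases)
  then have "cball c r \<in> null_sets lborel"
    by (subst AE_iff_null_sets) auto
  then have "emeasure lborel (cball c r) = 0" by auto
  then show False using assms unit_ball_vol_pos[of "real DIM('b)"] by (simp add: emeasure_cball)
qed

lemma L2_loc:
  fixes g :: "'b::euclidean_space \<Rightarrow> complex"
  assumes g: "L2 g" and S: "S \<in> sets borel" "emeasure lborel S < \<infinity>"
  shows "integrable lborel (\<lambda>t. g t * ind S t)"
proof -
  have [measurable]: "g \<in> borel_measurable lborel" using g by (simp add: L2_def)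
  have gi: "integrable lborel (\<lambda>t. (cmod (g t))\<^sup>2)" using g by (simp add: L2_def)
  show ?thesis
  proof (rule Bochner_Integration.integrable_bound)
    show "integrable lborel (\<lambda>t. (cmod (g t))\<^sup>2 + indicator S t :: real)"
      using gi S by (intro Bochner_Integration.integrable_add integrable_real_indicator) auto
    show "(\<lambda>t. g t * ind S t) \<in> borel_measurable lborel" using S by measurable
    show "AE t in lborel. norm (g t * ind S t) \<le> norm ((cmod (g t))\<^sup>2 + indicator S t :: real)"
    proof (rule AE_I2)
      fix t
      have "cmod (g t) \<le> (cmod (g t))\<^sup>2 + 1" by (rule le_sq_plus_one)
      then show "norm (g t * ind S t) \<le> norm ((cmod (g t))\<^sup>2 + indicator S t :: real)"
        by (auto simp: norm_mult indicator_def)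
    qed
  qed
qed


lemma ind_shift: "ind (cball 0 1) (t - y) = ind (cball y 1) (t::'a::euclidean_space)"
  by (simp add: ind_cases dist_norm norm_minus_commute)

lemma meas_snd_fst[measurable]: "(\<lambda>x::'a::euclidean_space\<times>('a\<times>'a). fst (snd x)) \<in> borel_measurable (lborel \<Otimes>\<^sub>M lborel)"
  by (rule meas_fst_snd)

lemma meas_F:
  fixes c0 x :: "'a::euclidean_space"
  shows "(\<lambda>q::'a \<times> ('a\<times>'a). ind (cball (c0,0) 1) (snd q) * ind (cball (x - fst (snd q)) 1) (fst q) * cnj (ee (snd (snd q) \<bullet> fst q)))
     \<in> borel_measurable (lborel \<Otimes>\<^sub>M lborel)"
proof -
  have m1: "(\<lambda>q::'a \<times> ('a\<times>'a). snd q) \<in> borel_measurable (lborel \<Otimes>\<^sub>M lborel)"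
    using measurable_snd[of "lborel::'a measure" "lborel::('a\<times>'a) measure"] by (simp add: measurable_lborel2)
  have a: "(\<lambda>q::'a \<times> ('a\<times>'a). ind (cball (c0,0) 1) (snd q)) \<in> borel_measurable (lborel \<Otimes>\<^sub>M lborel)"
    using measurable_compose[OF m1 ind_measurable[of "cball (c0, 0) 1"]] by (simp add: comp_def)
  have b0: "(\<lambda>q::'a \<times> ('a\<times>'a). fst q - (x - fst (snd q))) \<in> borel_measurable (lborel \<Otimes>\<^sub>M lborel)"
    by measurable
  have b: "(\<lambda>q::'a \<times> ('a\<times>'a). ind (cball (x - fst (snd q)) 1) (fst q)) \<in> borel_measurable (lborel \<Otimes>\<^sub>M lborel)"
    using measurable_compose[OF b0 ind_measurable[of "cball 0 1"]] by (simp add: comp_def ind_shift)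
  have c0': "(\<lambda>q::'a \<times> ('a\<times>'a). snd (snd q) \<bullet> fst q) \<in> borel_measurable (lborel \<Otimes>\<^sub>M lborel)"
    by measurable
  have c: "(\<lambda>q::'a \<times> ('a\<times>'a). cnj (ee (snd (snd q) \<bullet> fst q))) \<in> borel_measurable (lborel \<Otimes>\<^sub>M lborel)"
    by (rule measurable_cnj'[OF measurable_ee'[OF c0']])
  show ?thesis using a b c by measurable
qed

lemma stft_eq_FT:
  "stft (ind (cball 0 1)) g (x, \<omega>) = FT (\<lambda>t. g t * ind (cball x 1) t) \<omega>"
  unfolding stft_def FT_def ee_def by (simp add: ind_shift)

lemma fiber_zero:
  fixes \<psi> g :: "'a::euclidean_space \<Rightarrow> complex" and c0 x :: 'a
  assumes \<psi>: "L2 \<psi>" and g: "L2 g" and nc0: "norm c0 = 10"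
    and int: "integrable lborel (\<lambda>\<omega>. conv (ind (cball (c0, 0) 1)) (stft (ind (cball 0 1)) \<psi>) (x, \<omega>)
                  * cnj (stft (ind (cball 0 1)) g (x, \<omega>)))"
  shows "(\<integral>\<omega>. conv (ind (cball (c0, 0) 1)) (stft (ind (cball 0 1)) \<psi>) (x, \<omega>)
                  * cnj (stft (ind (cball 0 1)) g (x, \<omega>)) \<partial>lborel) = 0"
proof -
  define h where "h t = g t * ind (cball x 1) t" for t
  define M where "M t = (\<integral>w. ind (cball (c0, 0) 1) w * ind (cball (x - fst w) 1) t * cnj (ee (snd w \<bullet> t)) \<partial>lborel)" for t
  define f where "f t = \<psi> t * M t" for t
  have Vg: "stft (ind (cball 0 1)) g (x, \<omega>) = FT h \<omega>" for \<omega>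
    unfolding h_def by (rule stft_eq_FT)
  have hi: "integrable lborel h"
    unfolding h_def[abs_def] using cball_finite[of x 1] by (intro L2_loc[OF g]) auto
  have prodz: "ind (cball (c0, 0) 1) w * ind (cball (x - fst w) 1) t = 0"
    if "2 < norm (t - x + c0)" for t and w :: "'a \<times> 'a"
    proof (rule ccontr)
      assume "ind (cball (c0, 0) 1) w * ind (cball (x - fst w) 1) t \<noteq> 0"
      then have w1: "dist (c0, 0) w \<le> 1" and w2: "dist (x - fst w) t \<le> 1"
        by (auto simp: ind_cases split: if_splits)
      have "dist c0 (fst w) \<le> dist (c0, 0) w"
        using dist_fst_le[of "(c0, 0)" w] by simp
      then have "norm (fst w - c0) \<le> 1" using w1 by (simp add: dist_norm norm_minus_commute)
      moreover have "norm (t - x + fst w) \<le> 1" using w2 by (simp add: dist_norm norm_minus_commute algebra_simps)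
      moreover have "norm (t - x + c0) \<le> norm (t - x + fst w) + norm (fst w - c0)"
        using norm_triangle_ineq[of "t - x + fst w" "c0 - fst w"] by (simp add: algebra_simps norm_minus_commute)
      ultimately show False using that by linarith
    qed
  have Mz: "M t = 0" if "2 < norm (t - x + c0)" for t
  proof -
    note prodz[OF that]
    then have "(\<lambda>w. ind (cball (c0, 0) 1) w * ind (cball (x - fst w) 1) t * cnj (ee (snd w \<bullet> t))) = (\<lambda>w. 0)"
      by (auto simp: fun_eq_iff)
    then show ?thesis unfolding M_def by simp
  qed
  define F where "F t w = ind (cball (c0, 0) 1) w * ind (cball (x - fst w) 1) t * cnj (ee (snd w \<bullet> t))"
    for t :: 'a and w :: "'a \<times> 'a"
  have Fm: "case_prod F \<in> borel_measurable (lborel \<Otimes>\<^sub>M lborel)"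
    using meas_F[of c0 x] by (simp add: F_def[abs_def] split_beta')
  have Mm: "M \<in> borel_measurable lborel"
  proof -
    have "(\<lambda>t. \<integral>w. F t w \<partial>lborel) \<in> borel_measurable lborel"
      by (rule lborel.borel_measurable_lebesgue_integral[OF Fm])
    then show ?thesis unfolding M_def[abs_def] F_def .
  qed
  define m where "m = measure lborel (cball (c0, 0::'a) 1)"
  have Fi: "integrable lborel (F t)" for t
  proof (rule Bochner_Integration.integrable_bound)
    show "integrable lborel (indicator (cball (c0, 0::'a) 1) :: _ \<Rightarrow> real)"
      using cball_finite[of "(c0, 0::'a)" 1] by (intro integrable_real_indicator) auto
    show "F t \<in> borel_measurable lborel"
      using measurable_Pair2[OF Fm, of t] by simp
    show "AE w in lborel. norm (F t w) \<le> norm (indicator (cball (c0, 0::'a) 1) w :: real)"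
      by (auto simp: F_def norm_mult ind_cases indicator_def)
  qed
  have Mb: "norm (M t) \<le> m * indicator (cball (x - c0) 2) t" for t
  proof (cases "2 < norm (t - x + c0)")
    case True then show ?thesis using Mz by (simp add: m_def)
  next
    case False
    then have "t \<in> cball (x - c0) 2" by (simp add: dist_norm algebra_simps norm_minus_commute)
    have "norm (M t) \<le> (\<integral>w. indicator (cball (c0, 0::'a) 1) w \<partial>lborel)"
      unfolding M_def
    proof (rule Bochner_Integration.integral_norm_bound_integral)
      show "integrable lborel (\<lambda>w. ind (cball (c0, 0) 1) w * ind (cball (x - fst w) 1) t * cnj (ee (snd w \<bullet> t)))"
        using Fi[of t] by (simp add: F_def[abs_def])
      show "integrable lborel (indicator (cball (c0, 0::'a) 1) :: _ \<Rightarrow> real)"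
        using cball_finite[of "(c0, 0::'a)" 1] by (intro integrable_real_indicator) auto
    qed (auto simp: norm_mult ind_cases indicator_def)
    also have "\<dots> = m" unfolding m_def
      using cball_finite[of "(c0, 0::'a)" 1] by simp
    finally show ?thesis using \<open>t \<in> cball (x - c0) 2\<close> by simp
  qed
  have fi: "integrable lborel f"
  proof (rule Bochner_Integration.integrable_bound)
    show "integrable lborel (\<lambda>t. m * norm (\<psi> t * ind (cball (x - c0) 2) t))"
      using cball_finite[of "x - c0" 2]
      by (intro integrable_mult_right integrable_norm L2_loc[OF \<psi>]) auto
    have [measurable]: "\<psi> \<in> borel_measurable lborel" using \<psi> by (simp add: L2_def)
    show "f \<in> borel_measurable lborel" unfolding f_def[abs_def] using Mm by measurable
    show "AE t in lborel. norm (f t) \<le> norm (m * norm (\<psi> t * ind (cball (x - c0) 2) t))"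
    proof (rule AE_I2)
      fix t
      have "m \<ge> 0" by (simp add: m_def)
      have "norm (f t) = norm (\<psi> t) * norm (M t)" by (simp add: f_def norm_mult)
      also have "\<dots> \<le> norm (\<psi> t) * (m * indicator (cball (x - c0) 2) t)"
        by (intro mult_left_mono Mb) auto
      also have "\<dots> = norm (m * norm (\<psi> t * ind (cball (x - c0) 2) t))"
        using \<open>m \<ge> 0\<close> by (simp add: norm_mult ind_cases indicator_def)
      finally show "norm (f t) \<le> norm (m * norm (\<psi> t * ind (cball (x - c0) 2) t))" .
    qed
  qed
  have conv: "conv (ind (cball (c0, 0) 1)) (stft (ind (cball 0 1)) \<psi>) (x, \<omega>) = FT f \<omega>" for \<omega>
  proof -
    have \<psi>m[measurable]: "\<psi> \<in> borel_measurable lborel" using \<psi> by (simp add: L2_def)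
    define \<Psi> where "\<Psi> t w = (\<psi> t * ee (\<omega> \<bullet> t)) * F t w" for t w
    have Fm': "(\<lambda>q. F (fst q) (snd q)) \<in> borel_measurable (lborel \<Otimes>\<^sub>M lborel)"
      using Fm by (simp add: split_beta')
    have \<Psi>m: "case_prod \<Psi> \<in> borel_measurable (lborel \<Otimes>\<^sub>M lborel)"
      unfolding \<Psi>_def split_beta' using Fm' by measurable
    have Nb: "(\<integral>w. norm (F t w) \<partial>lborel) \<le> m * indicator (cball (x - c0) 2) t" for t
    proof (cases "2 < norm (t - x + c0)")
      case True
      then have "(\<lambda>w. norm (F t w)) = (\<lambda>w. 0)"
        using prodz[OF True] by (auto simp: fun_eq_iff F_def)
      then show ?thesis by (simp add: m_def)
    next
      case False
      then have "t \<in> cball (x - c0) 2" by (simp add: dist_norm algebra_simps norm_minus_commute)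
      have "(\<integral>w. norm (F t w) \<partial>lborel) \<le> (\<integral>w. indicator (cball (c0, 0::'a) 1) w \<partial>lborel)"
      proof (rule integral_mono)
        show "integrable lborel (\<lambda>w. norm (F t w))" using Fi[of t] by (rule integrable_norm)
        show "integrable lborel (indicator (cball (c0, 0::'a) 1) :: _ \<Rightarrow> real)"
          using cball_finite[of "(c0, 0::'a)" 1] by (intro integrable_real_indicator) auto
      qed (auto simp: F_def norm_mult ind_cases indicator_def)
      also have "\<dots> = m" unfolding m_def
        using cball_finite[of "(c0, 0::'a)" 1] by simp
      finally show ?thesis using \<open>t \<in> cball (x - c0) 2\<close> by simp
    qed
    have \<Psi>i: "integrable (lborel \<Otimes>\<^sub>M lborel) (case_prod \<Psi>)"
    proof (rule lborel_pair.Fubini_integrable[OF \<Psi>m])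
      have eqn: "(\<integral>w. norm (case_prod \<Psi> (t, w)) \<partial>lborel) = norm (\<psi> t) * (\<integral>w. norm (F t w) \<partial>lborel)" for t
        by (simp add: \<Psi>_def norm_mult)
      show "integrable lborel (\<lambda>t. \<integral>w. norm (case_prod \<Psi> (t, w)) \<partial>lborel)"
      proof (rule Bochner_Integration.integrable_bound)
        show "integrable lborel (\<lambda>t. m * norm (\<psi> t * ind (cball (x - c0) 2) t))"
          using cball_finite[of "x - c0" 2]
          by (intro integrable_mult_right integrable_norm L2_loc[OF \<psi>]) auto
        have "(\<lambda>q. norm (case_prod \<Psi> q)) \<in> borel_measurable (lborel \<Otimes>\<^sub>M lborel)"
          using \<Psi>m by measurable
        then have "case_prod (\<lambda>t w. norm (case_prod \<Psi> (t, w))) \<in> borel_measurable (lborel \<Otimes>\<^sub>M lborel)"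
          by (simp add: split_beta')
        then show "(\<lambda>t. \<integral>w. norm (case_prod \<Psi> (t, w)) \<partial>lborel) \<in> borel_measurable lborel"
          by (rule lborel.borel_measurable_lebesgue_integral)
        show "AE t in lborel. norm (\<integral>w. norm (case_prod \<Psi> (t, w)) \<partial>lborel) \<le> norm (m * norm (\<psi> t * ind (cball (x - c0) 2) t))"
        proof (rule AE_I2)
          fix t
          have "m \<ge> 0" by (simp add: m_def)
          have "norm (\<integral>w. norm (case_prod \<Psi> (t, w)) \<partial>lborel) = norm (\<psi> t) * (\<integral>w. norm (F t w) \<partial>lborel)"
            unfolding eqn by (simp add: integral_nonneg_AE)
          also have "\<dots> \<le> norm (\<psi> t) * (m * indicator (cball (x - c0) 2) t)"
            by (intro mult_left_mono Nb) auto
          also have "\<dots> = norm (m * norm (\<psi> t * ind (cball (x - c0) 2) t))"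
            using \<open>m \<ge> 0\<close> by (simp add: norm_mult ind_cases indicator_def)
          finally show "norm (\<integral>w. norm (case_prod \<Psi> (t, w)) \<partial>lborel) \<le> norm (m * norm (\<psi> t * ind (cball (x - c0) 2) t))" .
        qed
      qed
      show "AE t in lborel. integrable lborel (\<lambda>w. case_prod \<Psi> (t, w))"
        by (auto simp: \<Psi>_def intro!: integrable_mult_right Fi)
    qed
    have lhs: "conv (ind (cball (c0, 0) 1)) (stft (ind (cball 0 1)) \<psi>) (x, \<omega>) = (\<integral>w. (\<integral>t. \<Psi> t w \<partial>lborel) \<partial>lborel)"
    proof -
      have "ind (cball (c0, 0) 1) w * stft (ind (cball 0 1)) \<psi> ((x, \<omega>) - w) = (\<integral>t. \<Psi> t w \<partial>lborel)" for w
      proof -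
        obtain a b where w: "w = (a, b)" by (cases w)
        have "stft (ind (cball 0 1)) \<psi> ((x, \<omega>) - w) = FT (\<lambda>t. \<psi> t * ind (cball (x - a) 1) t) (\<omega> - b)"
          unfolding w by (simp add: stft_eq_FT)
        also have "\<dots> = (\<integral>t. \<psi> t * ind (cball (x - a) 1) t * (ee (\<omega> \<bullet> t) * cnj (ee (b \<bullet> t))) \<partial>lborel)"
          unfolding FT_def by (simp add: inner_diff_left cnj_ee ee_add[symmetric])
        finally have *: "stft (ind (cball 0 1)) \<psi> ((x, \<omega>) - w) = \<dots>" .
        have "(\<integral>t. \<Psi> t w \<partial>lborel) = (\<integral>t. ind (cball (c0, 0) 1) w * (\<psi> t * ind (cball (x - a) 1) t * (ee (\<omega> \<bullet> t) * cnj (ee (b \<bullet> t)))) \<partial>lborel)"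
          unfolding \<Psi>_def F_def w by (simp add: ac_simps)
        also have "\<dots> = ind (cball (c0, 0) 1) w * (\<integral>t. \<psi> t * ind (cball (x - a) 1) t * (ee (\<omega> \<bullet> t) * cnj (ee (b \<bullet> t))) \<partial>lborel)"
          by (rule integral_mult_right_zero)
        finally show ?thesis using * by simp
      qed
      then show ?thesis unfolding conv_def by simp
    qed
    have rhs: "FT f \<omega> = (\<integral>t. (\<integral>w. \<Psi> t w \<partial>lborel) \<partial>lborel)"
    proof -
      have "f t * ee (\<omega> \<bullet> t) = (\<integral>w. \<Psi> t w \<partial>lborel)" for t
      proof -
        have "f t * ee (\<omega> \<bullet> t) = (\<psi> t * ee (\<omega> \<bullet> t)) * (\<integral>w. F t w \<partial>lborel)"
          by (simp add: f_def M_def F_def ac_simps)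
        also have "\<dots> = (\<integral>w. \<Psi> t w \<partial>lborel)"
          unfolding \<Psi>_def by (rule integral_mult_right_zero[symmetric])
        finally show ?thesis .
      qed
      then show ?thesis unfolding FT_def by simp
    qed
    show ?thesis unfolding lhs rhs using lborel_pair.Fubini_integral[OF \<Psi>i] by simp
  qed
  have sep: "1 \<le> norm (t - s)" if "f t \<noteq> 0" "h s \<noteq> 0" for t s
  proof -
    have a: "norm (t - x + c0) \<le> 2" using that(1) Mz[of t] unfolding f_def by fastforce
    have b: "norm (x - s) \<le> 1" using that(2) unfolding h_def by (auto simp: ind_cases dist_norm split: if_splits)
    have "norm c0 \<le> norm (t - s) + norm (t - x + c0) + norm (x - s)"
    proof -
      have "c0 = (t - x + c0) + (x - s) - (t - s)" by (simp add: algebra_simps)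
      then have "norm c0 = norm ((t - x + c0) + (x - s) - (t - s))" by simp
      also have "\<dots> \<le> norm ((t - x + c0) + (x - s)) + norm (t - s)" by (rule norm_triangle_ineq4)
      also have "\<dots> \<le> norm (t - x + c0) + norm (x - s) + norm (t - s)"
        using norm_triangle_ineq[of "t - x + c0" "x - s"] by (intro add_right_mono)
      finally show ?thesis by simp
    qed
    then show ?thesis using a b nc0 by linarith
  qed
  have "(\<integral>\<omega>. FT f \<omega> * cnj (FT h \<omega>) \<partial>lborel) = 0"
  proof (rule parseval_sep[OF fi hi sep])
    show "integrable lborel (\<lambda>\<omega>. FT f \<omega> * cnj (FT h \<omega>))"
      using int by (simp add: conv Vg)
  qed
  then show ?thesis by (simp add: conv Vg)
qed


lemma main_zero:
  fixes \<psi> g :: "'a::euclidean_space \<Rightarrow> complex" and c0 :: 'a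
  assumes \<psi>: "L2 \<psi>" and g: "L2 g" and nc0: "norm c0 = 10"
  shows "blur_pairing (ind (cball (c0, 0) 1)) (ind (cball 0 1)) \<psi> g = 0"
proof -
  define I where "I z = conv (ind (cball (c0, 0) 1)) (stft (ind (cball 0 1)) \<psi>) z * cnj (stft (ind (cball 0 1)) g z)"
    for z :: "'a \<times> 'a"
  have P: "blur_pairing (ind (cball (c0, 0) 1)) (ind (cball 0 1)) \<psi> g = (\<integral>z. I z \<partial>lborel)"
    by (simp add: blur_pairing_def I_def)
  show ?thesis
  proof (cases "integrable lborel I")
    case False
    then show ?thesis unfolding P by (rule not_integrable_integral_eq)
  next
    case True
    then have Ii: "integrable (lborel \<Otimes>\<^sub>M lborel) (case_prod (\<lambda>x \<omega>. I (x, \<omega>)))"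
      by (simp add: lborel_prod)
    have "(\<integral>z. I z \<partial>lborel) = (\<integral>x. (\<integral>\<omega>. I (x, \<omega>) \<partial>lborel) \<partial>lborel)"
      using lborel_pair.integral_fst[OF Ii] by (simp add: lborel_prod)
    also have "\<dots> = (\<integral>x. 0 \<partial>(lborel::'a measure))"
    proof (rule Bochner_Integration.integral_cong_AE)
      show "(\<lambda>x. \<integral>\<omega>. I (x, \<omega>) \<partial>lborel) \<in> borel_measurable lborel"
        using lborel_pair.integrable_fst[OF Ii] by (rule borel_measurable_integrable)
      show "(\<lambda>x. 0::complex) \<in> borel_measurable lborel" by simp
      show "AE x in lborel. (\<integral>\<omega>. I (x, \<omega>) \<partial>lborel) = 0"
        using lborel_pair.AE_integrable_fst[OF Ii]
      proof (rule AE_mp, intro AE_I2 impI)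
        fix x assume "integrable lborel (\<lambda>\<omega>. I (x, \<omega>))"
        then show "(\<integral>\<omega>. I (x, \<omega>) \<partial>lborel) = 0"
          unfolding I_def by (rule fiber_zero[OF \<psi> g nc0])
      qed
    qed
    finally show ?thesis using P by simp
  qed
qed

lemma L2_ind: "L2 (ind (cball (0::'a::euclidean_space) 1))"
proof -
  have "(\<lambda>t. (cmod (ind (cball (0::'a) 1) t))\<^sup>2) = indicator (cball 0 1)"
    by (auto simp: fun_eq_iff indicator_def)
  then show ?thesis unfolding L2_def
    using cball_finite[of "0::'a" 1] by (auto intro: ind_measurable)
qed

theorem proposition4p8:
  "\<exists>(\<phi> :: 'a::euclidean_space \<Rightarrow> complex) (\<mu> :: 'a \<times> 'a \<Rightarrow> complex).
     L2 \<phi> \<and> nonzero_ae \<phi> \<and> L1 \<mu> \<and> nonzero_ae \<mu> \<and> blur_is_zero \<mu> \<phi>"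
proof -
  obtain b0 :: 'a where b0: "b0 \<in> Basis" using nonempty_Basis by blast
  define c0 where "c0 = 10 *\<^sub>R b0"
  have nc0: "norm c0 = 10" using b0 by (simp add: c0_def)
  have "L2 (ind (cball (0::'a) 1))" by (rule L2_ind)
  moreover have "nonzero_ae (ind (cball (0::'a) 1))" by (rule ind_cball_nonzero_ae) simp
  moreover have "L1 (ind (cball (c0, 0::'a) 1))" unfolding L1_def by (rule ind_cball_integrable)
  moreover have "nonzero_ae (ind (cball (c0, 0::'a) 1))" by (rule ind_cball_nonzero_ae) simp
  moreover have "blur_is_zero (ind (cball (c0, 0::'a) 1)) (ind (cball (0::'a) 1))"
    unfolding blur_is_zero_def using main_zero[OF _ _ nc0] by blast
  ultimately show ?thesis by blast
qed


end
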